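(* Let $\mathbb{F}_q$ be a finite field, $n\geq 1$, and let $M\in Mat_{n\times n}(\mathbb{F}_q[x])$ with $\det(M)\neq 0$ and $\deg(\det(M))=t$. Then for every integer $k\geq t$, \[\#\{X\in GL_n(\mathbb{F}_q[x])\,M : \deg(X_{i,j})\leq k \text{ for all } 1\leq i,j\leq n\}=\#GL_n(\mathbb{F}_q)\cdot q^{(n-1)(nk-t)}.\]
   Context: $GL_n(\mathbb{F}_q[x])M=\{gM: g\in GL_n(\mathbb{F}_q[x])\}$ is the orbit of $M$ under left multiplication by invertible matrices over the polynomial ring $\mathbb{F}_q[x]$ (i.e. matrices whose determinant is a nonzero constant). The zero polynomial is regarded as having degree $\leq k$ for every $k$. *)

theory Defs
  imports "HOL-Analysis.Analysis" "HOL-Computational_Algebra.Polynomial"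
begin

definition GL_poly :: "('a::field poly ^'n^'n) set" where
  "GL_poly = {g. det g \<noteq> 0 \<and> degree (det g) = 0}"

definition GL_orbit :: "'a::field poly ^'n^'n \<Rightarrow> ('a poly ^'n^'n) set" where
  "GL_orbit M = (\<lambda>g. g ** M) ` GL_poly"

end

theory Submission
  imports Defs
begin


lemma deg0_const: "degree (p::'a::zero poly) = 0 \<Longrightarrow> p = [:coeff p 0:]"
  by (intro poly_eqI) (auto simp: coeff_eq_0 coeff_pCons split: nat.split)

lemma coeff_mult_bound:
  fixes p q :: "'a::comm_semiring_1 poly"
  assumes "degree p \<le> m" "degree q \<le> n"
  shows "coeff (p * q) (m + n) = coeff p m * coeff q n"
proof -
  have "coeff (p * q) (m + n) = (\<Sum>i\<le>m+n. coeff p i * coeff q (m + n - i))"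
    by (simp add: coeff_mult)
  also have "\<dots> = coeff p m * coeff q (m + n - m) + (\<Sum>i\<in>{..m+n} - {m}. coeff p i * coeff q (m + n - i))"
    by (rule sum.remove) auto
  also have "(\<Sum>i\<in>{..m+n} - {m}. coeff p i * coeff q (m + n - i)) = 0"
  proof (rule sum.neutral, rule ballI)
    fix i assume "i \<in> {..m+n} - {m}"
    then have "i \<noteq> m" by auto
    show "coeff p i * coeff q (m + n - i) = 0"
    proof (cases "i < m")
      case True
      then have "degree q < m + n - i" using assms by linarith
      then show ?thesis by (simp add: coeff_eq_0)
    next
      case False
      with \<open>i \<noteq> m\<close> have "degree p < i" using assms by linarith
      then show ?thesis by (simp add: coeff_eq_0)
    qed
  qed
  finally show ?thesis by simp
qed

lemma coeff_prod_bound: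
  fixes f :: "'b \<Rightarrow> 'a::comm_semiring_1 poly"
  assumes "finite A" "\<And>i. i \<in> A \<Longrightarrow> degree (f i) \<le> d i"
  shows "coeff (\<Prod>i\<in>A. f i) (\<Sum>i\<in>A. d i) = (\<Prod>i\<in>A. coeff (f i) (d i))
         \<and> degree (\<Prod>i\<in>A. f i) \<le> (\<Sum>i\<in>A. d i)"
  using assms
proof (induction A rule: finite_induct)
  case empty
  then show ?case by simp
next
  case (insert x F)
  then have IH: "coeff (\<Prod>i\<in>F. f i) (\<Sum>i\<in>F. d i) = (\<Prod>i\<in>F. coeff (f i) (d i))"
     "degree (\<Prod>i\<in>F. f i) \<le> (\<Sum>i\<in>F. d i)" by auto
  have dx: "degree (f x) \<le> d x" using insert by auto
  have "coeff (\<Prod>i\<in>insert x F. f i) (\<Sum>i\<in>insert x F. d i)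
      = coeff (f x * (\<Prod>i\<in>F. f i)) (d x + (\<Sum>i\<in>F. d i))"
    using insert by simp
  also have "\<dots> = coeff (f x) (d x) * coeff (\<Prod>i\<in>F. f i) (\<Sum>i\<in>F. d i)"
    by (rule coeff_mult_bound[OF dx IH(2)])
  finally have c: "coeff (\<Prod>i\<in>insert x F. f i) (\<Sum>i\<in>insert x F. d i) = (\<Prod>i\<in>insert x F. coeff (f i) (d i))"
    using insert IH by simp
  have "degree (\<Prod>i\<in>insert x F. f i) \<le> degree (f x) + degree (\<Prod>i\<in>F. f i)"
    using insert by (simp add: degree_mult_le)
  also have "\<dots> \<le> (\<Sum>i\<in>insert x F. d i)" using insert dx IH(2) by (simp add: add_mono)
  finally show ?case using c by simp
qed

lemma finite_deg_le: "finite {p :: 'a::{finite,comm_semiring_1} poly. degree p \<le> k}"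
proof -
  have "{p :: 'a poly. degree p \<le> k} \<subseteq> (\<lambda>f. \<Sum>i\<le>k. monom (f i) i) ` (Pi\<^sub>E {..k} (\<lambda>_. UNIV))"
  proof
    fix p :: "'a poly" assume "p \<in> {p. degree p \<le> k}"
    then have "p = (\<Sum>i\<le>k. monom (restrict (coeff p) {..k} i) i)"
      by (simp add: poly_as_sum_of_monoms')
    moreover have "restrict (coeff p) {..k} \<in> Pi\<^sub>E {..k} (\<lambda>_. UNIV)" by simp
    ultimately show "p \<in> (\<lambda>f. \<Sum>i\<le>k. monom (f i) i) ` (Pi\<^sub>E {..k} (\<lambda>_. UNIV))" by blast
  qed
  moreover have "finite (Pi\<^sub>E {..k} (\<lambda>_. UNIV :: 'a set))" by (intro finite_PiE) auto
  ultimately show ?thesis by (meson finite_imageI finite_subset)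
qed

lemma finite_vec_set:
  assumes "\<And>i. finite (A i)"
  shows "finite {v :: 'b^'n::finite. \<forall>i. v$i \<in> A i}"
proof -
  have "{v :: 'b^'n. \<forall>i. v$i \<in> A i} \<subseteq> (\<lambda>f. \<chi> i. f i) ` (Pi\<^sub>E UNIV A)"
  proof
    fix v :: "'b^'n" assume "v \<in> {v. \<forall>i. v$i \<in> A i}"
    then have "(\<lambda>i. v$i) \<in> Pi\<^sub>E UNIV A" by auto
    moreover have "v = (\<chi> i. (\<lambda>i. v$i) i)" by simp
    ultimately show "v \<in> (\<lambda>f. \<chi> i. f i) ` (Pi\<^sub>E UNIV A)" by blast
  qed
  moreover have "finite (Pi\<^sub>E (UNIV::'n set) A)" by (intro finite_PiE) (auto simp: assms)
  ultimately show ?thesis by (meson finite_imageI finite_subset)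
qed

lemma finite_mat_deg:
  "finite {g :: 'a::{finite,comm_semiring_1} poly^'n::finite^'m::finite. \<forall>i j. degree (g$i$j) \<le> e j}"
proof -
  have f1: "finite {r :: 'a poly^'n. \<forall>j. r$j \<in> {p. degree p \<le> e j}}"
    by (rule finite_vec_set) (rule finite_deg_le)
  have "finite {g :: 'a poly^'n^'m. \<forall>i. g$i \<in> {r :: 'a poly^'n. \<forall>j. r$j \<in> {p. degree p \<le> e j}}}"
    by (rule finite_vec_set) (rule f1)
  then show ?thesis by simp
qed

section \<open>Determinant and degree bounds\<close>

lemma coeff_of_int_mult: "coeff (of_int k * p) n = of_int k * coeff (p :: 'a::comm_ring_1 poly) n"
  by (simp add: of_int_poly)

lemma det_col_bound:
  fixes g :: "'a::comm_ring_1 poly^'n^'n"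
  assumes "\<And>i j. degree (g$i$j) \<le> e j"
  shows "degree (det g) \<le> sum e UNIV \<and>
         coeff (det g) (sum e UNIV) = det (\<chi> i j. coeff (g$i$j) (e j))"
proof -
  have P: "coeff (\<Prod>i\<in>UNIV. g$i$p i) (sum e UNIV) = (\<Prod>i\<in>UNIV. coeff (g$i$p i) (e (p i)))
     \<and> degree (\<Prod>i\<in>UNIV. g$i$p i) \<le> sum e UNIV" if p: "p permutes UNIV" for p
  proof -
    have s: "sum e UNIV = (\<Sum>i\<in>UNIV. e (p i))"
      using sum.permute[OF p, of e] by (simp add: comp_def)
    show ?thesis unfolding s by (rule coeff_prod_bound) (auto simp: assms)
  qed
  have "degree (det g) \<le> sum e UNIV"
    unfolding det_def
  proof (rule degree_sum_le)
    fix p assume "p \<in> {p. p permutes (UNIV::'n set)}"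
    then have "degree (\<Prod>i\<in>UNIV. g$i$p i) \<le> sum e UNIV" using P by auto
    then show "degree (of_int (sign p) * (\<Prod>i\<in>UNIV. g$i$p i)) \<le> sum e UNIV"
      by (simp add: of_int_poly order_trans[OF degree_smult_le])
  qed simp
  moreover have "coeff (det g) (sum e UNIV) = det (\<chi> i j. coeff (g$i$j) (e j))"
    unfolding det_def coeff_sum coeff_of_int_mult
    by (intro sum.cong refl) (simp add: P)
  ultimately show ?thesis by simp
qed

lemma det_row_bound:
  fixes g :: "'a::comm_ring_1 poly^'n^'n"
  assumes "\<And>i j. degree (g$i$j) \<le> d i"
  shows "degree (det g) \<le> sum d UNIV \<and>
         coeff (det g) (sum d UNIV) = det (\<chi> i j. coeff (g$i$j) (d i))"
proof -
  have "\<And>i j. degree (transpose g$i$j) \<le> d j" by (simp add: transpose_def assms)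
  from det_col_bound[OF this]
  have "degree (det (transpose g)) \<le> sum d UNIV \<and>
     coeff (det (transpose g)) (sum d UNIV) = det (\<chi> i j. coeff (transpose g$i$j) (d j))" .
  moreover have "(\<chi> i j. coeff (transpose g$i$j) (d j)) = transpose (\<chi> i j. coeff (g$i$j) (d i))"
    by (simp add: transpose_def)
  ultimately show ?thesis by simp
qed

section \<open>Row and column operations\<close>

lemma det_rowop:
  fixes A :: "'a::comm_ring_1^'n^'n"
  assumes "i0 \<notin> S"
  shows "det (\<chi> r. if r = i0 then A$i0 + (\<Sum>s\<in>S. c s *s A$s) else A$r) = det A"
proof -
  have fS: "finite S" by simp
  have "det (\<chi> r. if r = i0 then A$i0 + (\<Sum>s\<in>S. c s *s A$s) else A$r)
      = det (\<chi> r. if r = i0 then A$i0 else A$r) + det (\<chi> r. if r = i0 then (\<Sum>s\<in>S. c s *s A$s) else A$r)"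
    by (rule det_row_add)
  also have "(\<chi> r. if r = i0 then A$i0 else A$r) = A"
    by (simp add: vec_eq_iff)
  also have "det (\<chi> r. if r = i0 then (\<Sum>s\<in>S. c s *s A$s) else A$r)
      = (\<Sum>s\<in>S. det (\<chi> r. if r = i0 then c s *s A$s else A$r))"
    by (rule det_linear_row_sum[OF fS])
  also have "\<dots> = (\<Sum>s\<in>S. c s * det (\<chi> r. if r = i0 then A$s else A$r))"
    by (intro sum.cong refl det_row_mul)
  also have "\<dots> = 0"
  proof (intro sum.neutral ballI)
    fix s assume "s \<in> S"
    then have "s \<noteq> i0" using assms by auto
    have "det (\<chi> r. if r = i0 then A$s else A$r) = 0"
      by (rule det_identical_rows[OF \<open>s \<noteq> i0\<close>[symmetric]]) (simp add: row_def \<open>s \<noteq> i0\<close>)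
    then show "c s * det (\<chi> r. if r = i0 then A$s else A$r) = 0" by simp
  qed
  finally show ?thesis by simp
qed

lemma det_colop:
  fixes A :: "'a::comm_ring_1^'n^'n"
  assumes "j \<notin> S"
  shows "det (\<chi> r c. if c = j then A$r$j + (\<Sum>l\<in>S. f l * A$r$l) else A$r$c) = det A"
proof -
  let ?B = "transpose A"
  have "transpose (\<chi> r c. if c = j then A$r$j + (\<Sum>l\<in>S. f l * A$r$l) else A$r$c)
      = (\<chi> r. if r = j then ?B$j + (\<Sum>s\<in>S. f s *s ?B$s) else ?B$r)"
    by (simp add: transpose_def vec_eq_iff)
  then have "det (transpose (\<chi> r c. if c = j then A$r$j + (\<Sum>l\<in>S. f l * A$r$l) else A$r$c))
      = det (\<chi> r. if r = j then ?B$j + (\<Sum>s\<in>S. f s *s ?B$s) else ?B$r)"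
    by simp
  then have "det (\<chi> r c. if c = j then A$r$j + (\<Sum>l\<in>S. f l * A$r$l) else A$r$c)
      = det (\<chi> r. if r = j then ?B$j + (\<Sum>s\<in>S. f s *s ?B$s) else ?B$r)"
    by (simp only: det_transpose)
  also have "\<dots> = det ?B" by (rule det_rowop[OF assms])
  finally show ?thesis by simp
qed



definition topm :: "('n \<Rightarrow> nat) \<Rightarrow> 'a::zero poly^'n^'m \<Rightarrow> 'a^'n^'m" where
  "topm e g = (\<chi> i j. coeff (g$i$j) (e j))"

definition Gc :: "('n::finite \<Rightarrow> nat) \<Rightarrow> ('a::field poly^'n^'n) set" where
  "Gc e = {g. (\<forall>i j. degree (g$i$j) \<le> e j) \<and> det g \<noteq> 0 \<and> degree (det g) = 0}"

definition indep :: "'a::field^'n^'m \<Rightarrow> 'n set \<Rightarrow> bool" where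
  "indep A S \<longleftrightarrow> (\<forall>v. (\<forall>l. l \<notin> S \<longrightarrow> v$l = 0) \<longrightarrow> A *v v = 0 \<longrightarrow> v = 0)"

lemma topm_nth [simp]: "topm e g $ i $ j = coeff (g$i$j) (e j)"
  by (simp add: topm_def)

lemma indep_UNIV:
  fixes A :: "'a::field^'n^'n"
  shows "indep A UNIV \<longleftrightarrow> det A \<noteq> 0"
proof -
  have "indep A UNIV \<longleftrightarrow> (\<forall>x. A *v x = 0 \<longrightarrow> x = 0)" by (simp add: indep_def)
  also have "\<dots> \<longleftrightarrow> (\<exists>B. B ** A = mat 1)" by (simp add: matrix_left_invertible_ker)
  also have "\<dots> \<longleftrightarrow> invertible A" by (simp add: invertible_left_inverse)
  also have "\<dots> \<longleftrightarrow> det A \<noteq> 0" by (rule invertible_det_nz)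
  finally show ?thesis .
qed

lemma indep_insert: "indep A (insert j S) \<Longrightarrow> indep A S"
  unfolding indep_def by auto

lemma det_zero_col:
  fixes A :: "'a::comm_ring_1^'n^'n"
  assumes "\<And>r. A$r$j = 0"
  shows "det A = 0"
proof -
  have "transpose A = (\<chi> i. if i = j then 0 else (transpose A)$i)"
    using assms by (simp add: vec_eq_iff transpose_def)
  then have "det (transpose A) = 0" by (metis det_row_0)
  then show ?thesis by simp
qed

lemma sum_supp:
  fixes w :: "'n::finite \<Rightarrow> 'b::comm_semiring_0"
  assumes "\<And>l. l \<notin> T \<Longrightarrow> w l = 0"
  shows "(\<Sum>c\<in>UNIV. f c * w c) = (\<Sum>c\<in>T. f c * w c)"
  by (rule sum.mono_neutral_right) (auto simp: assms)

lemma mv_nth: "(A *v v) $ r = (\<Sum>c\<in>UNIV. A$r$c * v$c)"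
  by (simp add: matrix_vector_mult_def)

lemma deg_le_pred:
  fixes p :: "'a::zero poly"
  assumes "degree p \<le> n" "coeff p n = 0"
  shows "degree p \<le> n - 1"
proof (cases "degree p = n")
  case True
  then have "p = 0" using assms by (metis leading_coeff_0_iff)
  then show ?thesis by simp
next
  case False
  then show ?thesis using assms by linarith
qed

lemma finite_Gc_set: "finite {g :: 'a::{field,finite} poly^'n::finite^'n. g \<in> Gc e \<and> P g}"
  by (rule finite_subset[OF _ finite_mat_deg[of e]]) (auto simp: Gc_def)

lemma card_vecS:
  "card {v :: ('a::{finite,zero})^'n::finite. \<forall>l. l \<notin> S \<longrightarrow> v$l = 0} = CARD('a) ^ card S"
proof -
  let ?V = "{v :: 'a^'n. \<forall>l. l \<notin> S \<longrightarrow> v$l = 0}"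
  have "bij_betw (\<lambda>v. restrict (\<lambda>l. v$l) S) ?V (Pi\<^sub>E S (\<lambda>_. UNIV))"
  proof (rule bij_betwI[where g = "\<lambda>f. \<chi> l. if l \<in> S then f l else 0"])
    show "(\<lambda>v. restrict (\<lambda>l. v$l) S) \<in> ?V \<rightarrow> Pi\<^sub>E S (\<lambda>_. UNIV)" by auto
    show "(\<lambda>f. \<chi> l. if l \<in> S then f l else 0) \<in> Pi\<^sub>E S (\<lambda>_. UNIV) \<rightarrow> ?V" by auto
    show "(\<chi> l. if l \<in> S then restrict (\<lambda>l. v$l) S l else 0) = v" if "v \<in> ?V" for v
      using that by (auto simp: vec_eq_iff)
    show "restrict (\<lambda>l. (\<chi> l. if l \<in> S then f l else 0) $ l) S = f" if "f \<in> Pi\<^sub>E S (\<lambda>_. UNIV)" for f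
      using that by (auto simp: PiE_def extensional_def restrict_def fun_eq_iff)
  qed
  then have "card ?V = card (Pi\<^sub>E S (\<lambda>_. UNIV :: 'a set))" by (rule bij_betw_same_card)
  also have "\<dots> = CARD('a) ^ card S" by (simp add: card_PiE)
  finally show ?thesis .
qed



lemma sum_supp_vec:
  fixes w :: "'b::comm_semiring_0^'n::finite"
  assumes "\<forall>l. l \<notin> T \<longrightarrow> w$l = 0"
  shows "(\<Sum>c\<in>UNIV. f c * w$c) = (\<Sum>c\<in>T. f c * w$c)"
  by (rule sum.mono_neutral_right) (use assms in auto)

lemma star_zero:
  fixes e :: "'n::finite \<Rightarrow> nat" and g :: "'a::field poly^'n^'n"
  assumes jS: "j \<notin> S" and le: "\<forall>l\<in>S. e l \<le> e j" and ej: "e j = 0"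
    and g: "g \<in> Gc e" and ind: "indep (topm e g) S"
  shows "indep (topm e g) (insert j S)"
proof (rule ccontr)
  assume "\<not> indep (topm e g) (insert j S)"
  then obtain w where w: "\<forall>l. l \<notin> insert j S \<longrightarrow> w$l = 0" "topm e g *v w = 0" "w \<noteq> 0"
    unfolding indep_def by blast
  have wj: "w$j \<noteq> 0"
  proof
    assume "w$j = 0"
    then have "\<forall>l. l \<notin> S \<longrightarrow> w$l = 0" using w(1) by auto
    then show False using ind w(2,3) unfolding indep_def by blast
  qed
  have e0: "e l = 0" if "l \<in> insert j S" for l using that le ej by auto
  have gdeg: "\<And>r c. degree (g$r$c) \<le> e c" using g by (auto simp: Gc_def)
  let ?f = "\<lambda>l. [:w$l / w$j:]"
  let ?A = "\<chi> r c. if c = j then g$r$j + (\<Sum>l\<in>S. ?f l * g$r$l) else g$r$c"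
  have "det ?A = det g" by (rule det_colop[OF jS])
  moreover have "det ?A = 0"
  proof (rule det_zero_col)
    fix r
    let ?p = "g$r$j + (\<Sum>l\<in>S. ?f l * g$r$l)"
    have dp: "degree ?p = 0"
    proof -
      have "degree (g$r$j) \<le> 0" using gdeg[of r j] ej by simp
      moreover have "degree (\<Sum>l\<in>S. ?f l * g$r$l) \<le> 0"
      proof (rule degree_sum_le)
        fix l assume "l \<in> S"
        then have "degree (g$r$l) \<le> 0" using gdeg[of r l] e0[of l] by simp
        then show "degree (?f l * g$r$l) \<le> 0"
          by (metis degree_pCons_0 degree_mult_le le_zero_eq add_0)
      qed simp
      ultimately show ?thesis by (meson degree_add_le le_zero_eq)
    qed
    have "coeff ?p 0 = coeff (g$r$j) 0 + (\<Sum>l\<in>S. w$l / w$j * coeff (g$r$l) 0)"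
      by (simp add: coeff_sum)
    also have "(\<Sum>l\<in>S. w$l / w$j * coeff (g$r$l) 0) = (\<Sum>l\<in>S. coeff (g$r$l) 0 * w$l) / w$j"
      by (simp add: sum_divide_distrib mult.commute)
    also have "coeff (g$r$j) 0 + (\<Sum>l\<in>S. coeff (g$r$l) 0 * w$l) / w$j
        = (\<Sum>c\<in>insert j S. coeff (g$r$c) 0 * w$c) / w$j"
      using jS wj by (simp add: field_simps)
    also have "(\<Sum>c\<in>insert j S. coeff (g$r$c) 0 * w$c) = (\<Sum>c\<in>UNIV. coeff (g$r$c) 0 * w$c)"
      by (rule sum_supp[symmetric]) (use w(1) in auto)
    also have "\<dots> = (topm e g *v w) $ r"
      by (simp add: mv_nth) (intro sum.cong refl, use e0 w(1) in \<open>metis mult_zero_right\<close>)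
    also have "\<dots> = 0" using w(2) by simp
    finally have "coeff ?p 0 = 0" by simp
    moreover have "?p = [:coeff ?p 0:]" by (rule deg0_const[OF dp])
    ultimately have "?p = 0" by simp
    then show "?A$r$j = 0" by simp
  qed
  ultimately show False using g by (simp add: Gc_def)
qed

definition colop :: "'n \<Rightarrow> 'n set \<Rightarrow> ('n \<Rightarrow> nat) \<Rightarrow> 'a::comm_ring_1^'n \<Rightarrow> 'a poly^'n^'n \<Rightarrow> 'a poly^'n^'n" where
  "colop j S e v g = (\<chi> r c. if c = j then g$r$j + (\<Sum>l\<in>S. monom (v$l) (e j - e l) * g$r$l) else g$r$c)"

lemma colop_nth: "colop j S e v g $ r $ c = (if c = j then g$r$j + (\<Sum>l\<in>S. monom (v$l) (e j - e l) * g$r$l) else g$r$c)"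
  by (simp add: colop_def)

lemma colop_top:
  fixes e :: "'n::finite \<Rightarrow> nat" and g :: "'a::field poly^'n^'n"
  assumes jS: "j \<notin> S" and le: "\<forall>l\<in>S. e l \<le> e j" and dj: "\<And>r. degree (g$r$j) < e j"
  shows "coeff (colop j S e v g $ r $ j) (e j) = (\<Sum>l\<in>S. v$l * coeff (g$r$l) (e l))"
proof -
  have "coeff (colop j S e v g $ r $ j) (e j) = coeff (g$r$j) (e j) + (\<Sum>l\<in>S. coeff (monom (v$l) (e j - e l) * g$r$l) (e j))"
    by (simp add: colop_nth coeff_sum)
  also have "coeff (g$r$j) (e j) = 0" using dj by (simp add: coeff_eq_0)
  also have "(\<Sum>l\<in>S. coeff (monom (v$l) (e j - e l) * g$r$l) (e j)) = (\<Sum>l\<in>S. v$l * coeff (g$r$l) (e l))"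
  proof (intro sum.cong refl)
    fix l assume "l \<in> S"
    then have "e l \<le> e j" using le by auto
    then show "coeff (monom (v$l) (e j - e l) * g$r$l) (e j) = v$l * coeff (g$r$l) (e l)"
      by (simp add: coeff_monom_mult)
  qed
  finally show ?thesis by simp
qed

lemma colop_deg:
  fixes e :: "'n::finite \<Rightarrow> nat" and g :: "'a::field poly^'n^'n"
  assumes le: "\<forall>l\<in>S. e l \<le> e j" and dg: "\<And>r c. degree (g$r$c) \<le> e c"
  shows "degree (colop j S e v g $ r $ j) \<le> e j"
proof -
  have "degree (\<Sum>l\<in>S. monom (v$l) (e j - e l) * g$r$l) \<le> e j"
  proof (rule degree_sum_le)
    fix l assume "l \<in> S"
    then have "e l \<le> e j" using le by auto
    have "degree (monom (v$l) (e j - e l) * g$r$l) \<le> degree (monom (v$l) (e j - e l)) + degree (g$r$l)"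
      by (rule degree_mult_le)
    also have "\<dots> \<le> (e j - e l) + e l" using dg[of r l] by (intro add_mono degree_monom_le) auto
    finally show "degree (monom (v$l) (e j - e l) * g$r$l) \<le> e j" using \<open>e l \<le> e j\<close> by simp
  qed simp
  then show ?thesis using dg[of r j] by (simp add: colop_nth degree_add_le)
qed

lemma colop_det:
  fixes g :: "'a::field poly^'n::finite^'n"
  assumes "j \<notin> S"
  shows "det (colop j S e v g) = det g"
  unfolding colop_def by (rule det_colop[OF assms])

lemma star_pos:
  fixes e :: "'n::finite \<Rightarrow> nat"
  assumes jS: "j \<notin> S" and le: "\<forall>l\<in>S. e l \<le> e j" and ej: "e j > 0"
  shows "card {g :: 'a::{field,finite} poly^'n^'n. (g \<in> Gc e \<and> indep (topm e g) S) \<and> \<not> indep (topm e g) (insert j S)}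
       = CARD('a) ^ card S * card {g :: 'a poly^'n^'n. g \<in> Gc (e(j := e j - 1)) \<and> indep (topm (e(j := e j - 1)) g) S}"
proof -
  define e' where "e' = e(j := e j - 1)"
  define V where "V = {v :: 'a^'n. \<forall>l. l \<notin> S \<longrightarrow> v$l = 0}"
  define G' where "G' = {g :: 'a poly^'n^'n. g \<in> Gc e' \<and> indep (topm e' g) S}"
  define D where "D = {g :: 'a poly^'n^'n. (g \<in> Gc e \<and> indep (topm e g) S) \<and> \<not> indep (topm e g) (insert j S)}"
  have e'S: "e' l = e l" if "l \<noteq> j" for l using that by (simp add: e'_def)
  have e'j: "e' j = e j - 1" by (simp add: e'_def)
  have e'S2: "e' l = e l" if "l \<in> S" for l using that jS by (auto simp: e'_def)
  have colS: "colop j S e v g $ r $ l = g $ r $ l" if "l \<in> S" for v g r l using that jS by (auto simp: colop_nth)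
  let ?phi = "\<lambda>(v, g'). colop j S e v g'"
  have top_phi: "topm e (colop j S e v g') *v u = topm e' g' *v u"
    if "g' \<in> Gc e'" "\<forall>l. l \<notin> S \<longrightarrow> u$l = 0" for v g' u
  proof -
    have "(topm e (colop j S e v g') *v u) $ r = (topm e' g' *v u) $ r" for r
    proof -
      have "(topm e (colop j S e v g') *v u) $ r = (\<Sum>c\<in>S. coeff (colop j S e v g' $ r $ c) (e c) * u$c)"
        by (simp add: mv_nth sum_supp[where T=S] that(2))
      also have "\<dots> = (\<Sum>c\<in>S. coeff (g' $ r $ c) (e' c) * u$c)"
        by (intro sum.cong refl) (simp add: colS e'S2)
      also have "\<dots> = (topm e' g' *v u) $ r"
        by (simp add: mv_nth sum_supp[where T=S] that(2))
      finally show ?thesis .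
    qed
    then show ?thesis by (simp add: vec_eq_iff)
  qed
  have phi_in: "colop j S e v g' \<in> D" if v: "v \<in> V" and g': "g' \<in> G'" for v g'
  proof -
    have g'G: "g' \<in> Gc e'" and g'i: "indep (topm e' g') S" using g' by (auto simp: G'_def)
    have dg': "degree (g'$r$c) \<le> e' c" for r c using g'G by (auto simp: Gc_def)
    have dge: "degree (g'$r$c) \<le> e c" for r c using dg'[of r c] by (cases "c = j") (auto simp: e'S e'j)
    have dj: "degree (g'$r$j) < e j" for r using dg'[of r j] ej e'j by simp
    have inG: "colop j S e v g' \<in> Gc e"
    proof -
      have "degree (colop j S e v g' $ r $ c) \<le> e c" for r c
        using colop_deg[OF le dge] dge by (cases "c = j") (auto simp: colop_nth)
      moreover have "det (colop j S e v g') = det g'" by (rule colop_det[OF jS])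
      ultimately show ?thesis using g'G by (auto simp: Gc_def)
    qed
    have ind: "indep (topm e (colop j S e v g')) S"
      using g'i top_phi[OF g'G] unfolding indep_def by metis
    define w where "w = (\<chi> l. if l = j then 1 else - v$l)"
    have wsupp: "\<forall>l. l \<notin> insert j S \<longrightarrow> w$l = 0" using v by (auto simp: w_def V_def)
    have "(topm e (colop j S e v g') *v w) $ r = 0" for r
    proof -
      have "(topm e (colop j S e v g') *v w) $ r = (\<Sum>c\<in>insert j S. coeff (colop j S e v g' $ r $ c) (e c) * w$c)"
        by (simp add: mv_nth sum_supp_vec[OF wsupp])
      also have "\<dots> = coeff (colop j S e v g' $ r $ j) (e j) * w$j + (\<Sum>c\<in>S. coeff (colop j S e v g' $ r $ c) (e c) * w$c)"
        using jS by simp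
      also have "(\<Sum>c\<in>S. coeff (colop j S e v g' $ r $ c) (e c) * w$c) = (\<Sum>c\<in>S. - (coeff (g' $ r $ c) (e c) * v$c))"
      proof (rule sum.cong[OF refl])
        fix c assume "c \<in> S"
        then have "c \<noteq> j" using jS by auto
        then show "coeff (colop j S e v g' $ r $ c) (e c) * w$c = - (coeff (g' $ r $ c) (e c) * v$c)"
          by (simp add: w_def colop_nth)
      qed
      also have "coeff (colop j S e v g' $ r $ j) (e j) * w$j + (\<Sum>c\<in>S. - (coeff (g' $ r $ c) (e c) * v$c))
          = coeff (colop j S e v g' $ r $ j) (e j) - (\<Sum>c\<in>S. coeff (g' $ r $ c) (e c) * v$c)"
        by (simp add: w_def sum_negf)
      also have "\<dots> = 0" using colop_top[OF jS le dj] by (simp add: mult.commute)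
      finally show ?thesis .
    qed
    then have "topm e (colop j S e v g') *v w = 0" by (simp add: vec_eq_iff)
    moreover have "w \<noteq> 0" by (auto simp: w_def vec_eq_iff intro!: exI[of _ j])
    ultimately have "\<not> indep (topm e (colop j S e v g')) (insert j S)"
      using wsupp unfolding indep_def by blast
    then show ?thesis using inG ind by (simp add: D_def)
  qed
  have phi_inj: "inj_on ?phi (V \<times> G')"
  proof (rule inj_onI)
    fix x y assume x: "x \<in> V \<times> G'" and y: "y \<in> V \<times> G'" and eq: "?phi x = ?phi y"
    obtain v1 g1 where x1: "x = (v1, g1)" by (cases x)
    obtain v2 g2 where y1: "y = (v2, g2)" by (cases y)
    have v1: "v1 \<in> V" and g1: "g1 \<in> G'" and v2: "v2 \<in> V" and g2: "g2 \<in> G'" using x y x1 y1 by auto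
    have eq': "colop j S e v1 g1 = colop j S e v2 g2" using eq x1 y1 by simp
    have cols: "g1$r$c = g2$r$c" if "c \<noteq> j" for r c
      using arg_cong[OF eq', of "\<lambda>A. A$r$c"] that by (simp add: colop_nth)
    have g1G: "g1 \<in> Gc e'" and g2G: "g2 \<in> Gc e'" and i1: "indep (topm e' g1) S"
      using g1 g2 by (auto simp: G'_def)
    have dj1: "degree (g1$r$j) < e j" for r
    proof -
      have "degree (g1$r$j) \<le> e' j" using g1G by (simp add: Gc_def)
      then show ?thesis using ej e'j by linarith
    qed
    have dj2: "degree (g2$r$j) < e j" for r
    proof -
      have "degree (g2$r$j) \<le> e' j" using g2G by (simp add: Gc_def)
      then show ?thesis using ej e'j by linarith
    qed
    have "(topm e' g1 *v (v1 - v2)) $ r = 0" for r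
    proof -
      have "(\<Sum>l\<in>S. v1$l * coeff (g1$r$l) (e l)) = (\<Sum>l\<in>S. v2$l * coeff (g2$r$l) (e l))"
        using colop_top[OF jS le dj1, of v1 r] colop_top[OF jS le dj2, of v2 r]
          arg_cong[OF eq', of "\<lambda>A. coeff (A$r$j) (e j)"] by simp
      also have "\<dots> = (\<Sum>l\<in>S. v2$l * coeff (g1$r$l) (e l))"
      proof (rule sum.cong[OF refl])
        fix l assume "l \<in> S"
        then have "l \<noteq> j" using jS by auto
        then show "v2$l * coeff (g2$r$l) (e l) = v2$l * coeff (g1$r$l) (e l)" by (simp add: cols)
      qed
      finally have "(\<Sum>l\<in>S. (v1$l - v2$l) * coeff (g1$r$l) (e l)) = 0"
        by (simp add: left_diff_distrib sum_subtractf)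
      moreover have "(topm e' g1 *v (v1 - v2)) $ r = (\<Sum>l\<in>S. coeff (g1$r$l) (e' l) * (v1$l - v2$l))"
        using v1 v2 by (simp add: mv_nth sum_supp[where T=S] V_def)
      moreover have "(\<Sum>l\<in>S. coeff (g1$r$l) (e' l) * (v1$l - v2$l)) = (\<Sum>l\<in>S. (v1$l - v2$l) * coeff (g1$r$l) (e l))"
        by (intro sum.cong refl) (simp add: e'S2)
      ultimately show ?thesis by simp
    qed
    then have "topm e' g1 *v (v1 - v2) = 0" by (simp add: vec_eq_iff)
    moreover have "\<forall>l. l \<notin> S \<longrightarrow> (v1 - v2)$l = 0" using v1 v2 by (simp add: V_def)
    ultimately have "v1 - v2 = 0" using i1 unfolding indep_def by blast
    then have vv: "v1 = v2" by simp
    have "g1$r$j = g2$r$j" for r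
    proof -
      have "g1$r$j + (\<Sum>l\<in>S. monom (v1$l) (e j - e l) * g1$r$l) = g2$r$j + (\<Sum>l\<in>S. monom (v2$l) (e j - e l) * g2$r$l)"
        using arg_cong[OF eq', of "\<lambda>A. A$r$j"] by (simp add: colop_nth)
      moreover have "(\<Sum>l\<in>S. monom (v2$l) (e j - e l) * g2$r$l) = (\<Sum>l\<in>S. monom (v1$l) (e j - e l) * g1$r$l)"
      proof (rule sum.cong[OF refl])
        fix l assume "l \<in> S"
        then have "l \<noteq> j" using jS by auto
        then show "monom (v2$l) (e j - e l) * g2$r$l = monom (v1$l) (e j - e l) * g1$r$l" by (simp add: cols vv)
      qed
      ultimately show ?thesis by simp
    qed
    then have "g1$r$c = g2$r$c" for r c using cols by (cases "c = j") auto
    then have "g1 = g2" by (simp add: vec_eq_iff)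
    then show "x = y" using x1 y1 vv by simp
  qed
  have phi_surj: "D \<subseteq> ?phi ` (V \<times> G')"
  proof
    fix g assume gD: "g \<in> D"
    then have gG: "g \<in> Gc e" and gi: "indep (topm e g) S" and gn: "\<not> indep (topm e g) (insert j S)"
      by (auto simp: D_def)
    have dg: "degree (g$r$c) \<le> e c" for r c using gG by (auto simp: Gc_def)
    obtain w where w: "\<forall>l. l \<notin> insert j S \<longrightarrow> w$l = 0" "topm e g *v w = 0" "w \<noteq> 0"
      using gn unfolding indep_def by blast
    have wj: "w$j \<noteq> 0"
    proof
      assume "w$j = 0"
      then have "\<forall>l. l \<notin> S \<longrightarrow> w$l = 0" using w(1) by auto
      then show False using gi w(2,3) unfolding indep_def by blast
    qed
    define v where "v = (\<chi> l. if l \<in> S then - w$l / w$j else 0)"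
    define g' where "g' = colop j S e (- v) g"
    have vV: "v \<in> V" by (simp add: v_def V_def)
    have g'c: "g'$r$c = g$r$c" if "c \<noteq> j" for r c using that by (simp add: g'_def colop_nth)
    have g'top: "coeff (g'$r$j) (e j) = 0" for r
    proof -
      have "coeff (g'$r$j) (e j) = coeff (g$r$j) (e j) + (\<Sum>l\<in>S. coeff (monom ((- v)$l) (e j - e l) * g$r$l) (e j))"
        by (simp add: g'_def colop_nth coeff_sum)
      also have "(\<Sum>l\<in>S. coeff (monom ((- v)$l) (e j - e l) * g$r$l) (e j)) = (\<Sum>l\<in>S. w$l / w$j * coeff (g$r$l) (e l))"
      proof (intro sum.cong refl)
        fix l assume "l \<in> S"
        then have "e l \<le> e j" using le by auto
        then show "coeff (monom ((- v)$l) (e j - e l) * g$r$l) (e j) = w$l / w$j * coeff (g$r$l) (e l)"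
          using \<open>l \<in> S\<close> by (simp add: coeff_monom_mult v_def)
      qed
      also have "(\<Sum>l\<in>S. w$l / w$j * coeff (g$r$l) (e l)) = (\<Sum>l\<in>S. coeff (g$r$l) (e l) * w$l) / w$j"
        by (simp add: sum_divide_distrib mult.commute)
      also have "coeff (g$r$j) (e j) + (\<Sum>l\<in>S. coeff (g$r$l) (e l) * w$l) / w$j
          = (\<Sum>c\<in>insert j S. coeff (g$r$c) (e c) * w$c) / w$j"
        using jS wj by (simp add: field_simps)
      also have "(\<Sum>c\<in>insert j S. coeff (g$r$c) (e c) * w$c) = (topm e g *v w) $ r"
        by (simp add: mv_nth sum_supp_vec[OF w(1)])
      also have "\<dots> = 0" using w(2) by simp
      finally show ?thesis by simp
    qed
    have g'G: "g' \<in> Gc e'"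
    proof -
      have "degree (g'$r$c) \<le> e' c" for r c
      proof (cases "c = j")
        case True
        have "degree (g'$r$j) \<le> e j" unfolding g'_def by (rule colop_deg[OF le dg])
        then have "degree (g'$r$j) \<le> e j - 1" by (rule deg_le_pred[OF _ g'top])
        then show ?thesis using True by (simp add: e'j)
      next
        case False
        then show ?thesis using dg[of r c] by (simp add: g'c e'S)
      qed
      moreover have "det g' = det g" unfolding g'_def by (rule colop_det[OF jS])
      ultimately show ?thesis using gG by (simp add: Gc_def)
    qed
    have "topm e' g' *v u = topm e g *v u" if "\<forall>l. l \<notin> S \<longrightarrow> u$l = 0" for u
    proof -
      have "(topm e' g' *v u) $ r = (topm e g *v u) $ r" for r
      proof -
        have "(topm e' g' *v u) $ r = (\<Sum>c\<in>S. coeff (g' $ r $ c) (e' c) * u$c)"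
          by (simp add: mv_nth sum_supp[where T=S] that)
        also have "\<dots> = (\<Sum>c\<in>S. coeff (g $ r $ c) (e c) * u$c)"
          by (intro sum.cong refl) (simp add: g'_def colS e'S2)
        also have "\<dots> = (topm e g *v u) $ r"
          by (simp add: mv_nth sum_supp[where T=S] that)
        finally show ?thesis .
      qed
      then show ?thesis by (simp add: vec_eq_iff)
    qed
    then have "indep (topm e' g') S" using gi unfolding indep_def by metis
    then have g'G': "g' \<in> G'" using g'G by (simp add: G'_def)
    have "colop j S e v g' = g"
    proof -
      have "colop j S e v g' $ r $ c = g $ r $ c" for r c
      proof (cases "c = j")
        case True
        have "colop j S e v g' $ r $ j = g'$r$j + (\<Sum>l\<in>S. monom (v$l) (e j - e l) * g'$r$l)"
          by (simp add: colop_nth)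
        also have "(\<Sum>l\<in>S. monom (v$l) (e j - e l) * g'$r$l) = (\<Sum>l\<in>S. monom (v$l) (e j - e l) * g$r$l)"
        proof (rule sum.cong[OF refl])
          fix l assume "l \<in> S"
          then have "l \<noteq> j" using jS by auto
          then show "monom (v$l) (e j - e l) * g'$r$l = monom (v$l) (e j - e l) * g$r$l" by (simp add: g'c)
        qed
        also have "g'$r$j = g$r$j + (\<Sum>l\<in>S. monom ((- v)$l) (e j - e l) * g$r$l)"
          by (simp add: g'_def colop_nth)
        finally show ?thesis using True by (simp add: sum_negf minus_monom[symmetric])
      next
        case False
        then show ?thesis by (simp add: colop_nth g'c)
      qed
      then show ?thesis by (simp add: vec_eq_iff)
    qed
    then show "g \<in> ?phi ` (V \<times> G')" using vV g'G' by (auto intro!: image_eqI[where x="(v, g')"])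
  qed
  have phi_into: "?phi ` (V \<times> G') \<subseteq> D" using phi_in by auto
  have "bij_betw ?phi (V \<times> G') D"
    unfolding bij_betw_def using phi_inj phi_into phi_surj by auto
  then have "card D = card (V \<times> G')" by (simp add: bij_betw_same_card)
  also have "\<dots> = card V * card G'" by (rule card_cartesian_product)
  also have "card V = CARD('a) ^ card S" unfolding V_def by (rule card_vecS)
  finally show ?thesis by (simp add: D_def G'_def e'_def)
qed



definition SS :: "('n::finite \<Rightarrow> nat) \<Rightarrow> 'n set \<Rightarrow> ('a::field poly^'n^'n) set" where
  "SS e S = {g. g \<in> Gc e \<and> indep (topm e g) S}"

lemma finite_SS: "finite (SS e S :: ('a::{field,finite} poly^'n::finite^'n) set)"
  unfolding SS_def by (rule finite_Gc_set)

lemma star: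
  fixes e :: "'n::finite \<Rightarrow> nat"
  assumes jS: "j \<notin> S" and le: "\<forall>l\<in>S. e l \<le> e j"
  shows "card (SS e S :: ('a::{field,finite} poly^'n^'n) set)
       = card (SS e (insert j S) :: ('a poly^'n^'n) set)
       + (if e j = 0 then 0 else CARD('a) ^ card S * card (SS (e(j := e j - 1)) S :: ('a poly^'n^'n) set))"
proof -
  define D where "D = {g :: 'a poly^'n^'n. (g \<in> Gc e \<and> indep (topm e g) S) \<and> \<not> indep (topm e g) (insert j S)}"
  have U: "(SS e S :: ('a poly^'n^'n) set) = SS e (insert j S) \<union> D"
    unfolding SS_def D_def using indep_insert by blast
  have fD: "finite D" by (rule finite_subset[OF _ finite_SS[of e S]]) (auto simp: D_def SS_def)
  have "card (SS e S :: ('a poly^'n^'n) set) = card (SS e (insert j S) :: ('a poly^'n^'n) set) + card D"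
    unfolding U by (rule card_Un_disjoint[OF finite_SS fD]) (auto simp: SS_def D_def)
  moreover have "card D = (if e j = 0 then 0 else CARD('a) ^ card S * card (SS (e(j := e j - 1)) S :: ('a poly^'n^'n) set))"
  proof (cases "e j = 0")
    case True
    then have "D = {}" unfolding D_def using star_zero[OF jS le True] by blast
    then show ?thesis using True by simp
  next
    case False
    then show ?thesis unfolding D_def SS_def using star_pos[OF jS le] by simp
  qed
  ultimately show ?thesis by simp
qed

lemma SS_empty: "SS e {} = Gc e"
  by (auto simp: SS_def indep_def vec_eq_iff)

lemma base_count:
  fixes e :: "'n::finite \<Rightarrow> nat"
  shows "card (SS e UNIV :: ('a::{field,finite} poly^'n^'n) set)
       = (if sum e UNIV = 0 then card {A :: 'a^'n^'n. invertible A} else 0)"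
proof (cases "sum e UNIV = 0")
  case False
  have "SS e UNIV = ({} :: ('a poly^'n^'n) set)"
  proof (rule ccontr)
    assume "SS e UNIV \<noteq> ({} :: ('a poly^'n^'n) set)"
    then obtain g :: "'a poly^'n^'n" where g: "g \<in> Gc e" "indep (topm e g) UNIV"
      by (auto simp: SS_def)
    have dg: "\<And>i j. degree (g$i$j) \<le> e j" using g by (auto simp: Gc_def)
    from det_col_bound[OF dg]
    have "coeff (det g) (sum e UNIV) = det (topm e g)" by (simp add: topm_def)
    moreover have "coeff (det g) (sum e UNIV) = 0"
    proof (rule coeff_eq_0)
      have d0: "degree (det g) = 0" using g(1) by (simp add: Gc_def)
      show "degree (det g) < sum e UNIV" using False d0 by linarith
    qed
    ultimately have "det (topm e g) = 0" by simp
    then show False using g(2) by (simp add: indep_UNIV)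
  qed
  then show ?thesis unfolding if_not_P[OF False] by simp
next
  case True
  then have e0: "e j = 0" for j by simp
  have dg0: "degree (g$i$j) = 0" if "g \<in> Gc e" for g :: "'a poly^'n^'n" and i j
  proof -
    have "degree (g$i$j) \<le> e j" using that by (simp add: Gc_def)
    then show ?thesis using e0[of j] by simp
  qed
  let ?emb = "\<lambda>A :: 'a^'n^'n. (\<chi> i j. [:A$i$j:]) :: 'a poly^'n^'n"
  have detemb: "degree (det (?emb A)) = 0 \<and> coeff (det (?emb A)) 0 = det A" for A
  proof -
    have "\<And>i j. degree (?emb A $i$j) \<le> e j" by simp
    from det_col_bound[OF this] show ?thesis using True e0 by simp
  qed
  have detG: "det (topm e g) = coeff (det g) 0" if "g \<in> Gc e" for g :: "'a poly^'n^'n"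
  proof -
    have "\<And>i j. degree (g$i$j) \<le> e j" using that by (auto simp: Gc_def)
    from det_col_bound[OF this] show ?thesis using True by (simp add: topm_def)
  qed
  have SSeq: "SS e UNIV = (Gc e :: ('a poly^'n^'n) set)"
  proof -
    have "indep (topm e g) UNIV" if "g \<in> Gc e" for g :: "'a poly^'n^'n"
    proof -
      have "det g = [:coeff (det g) 0:]" using that by (intro deg0_const) (auto simp: Gc_def)
      then have "coeff (det g) 0 \<noteq> 0" using that by (auto simp: Gc_def)
      then show ?thesis using detG[OF that] by (simp add: indep_UNIV)
    qed
    then show ?thesis by (auto simp: SS_def)
  qed
  have "bij_betw (topm e) (Gc e :: ('a poly^'n^'n) set) {A :: 'a^'n^'n. invertible A}"
  proof (rule bij_betwI[where g = ?emb])
    show "topm e \<in> (Gc e :: ('a poly^'n^'n) set) \<rightarrow> {A. invertible A}"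
    proof
      fix g :: "'a poly^'n^'n" assume g: "g \<in> Gc e"
      have "det g = [:coeff (det g) 0:]" using g by (intro deg0_const) (auto simp: Gc_def)
      then have "coeff (det g) 0 \<noteq> 0" using g by (auto simp: Gc_def)
      then show "topm e g \<in> {A. invertible A}" using detG[OF g] by (simp add: invertible_det_nz)
    qed
    show "?emb \<in> {A. invertible A} \<rightarrow> Gc e"
    proof
      fix A :: "'a^'n^'n" assume "A \<in> {A. invertible A}"
      then have "det A \<noteq> 0" by (simp add: invertible_det_nz)
      then have "det (?emb A) \<noteq> 0" using detemb[of A] by auto
      then show "?emb A \<in> Gc e" using detemb[of A] e0 by (simp add: Gc_def)
    qed
    show "?emb (topm e g) = g" if "g \<in> Gc e" for g
    proof -
      have "g$i$j = [:coeff (g$i$j) 0:]" for i j by (rule deg0_const[OF dg0[OF that]])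
      then show ?thesis using e0 by (simp add: vec_eq_iff)
    qed
    show "topm e (?emb A) = A" for A using e0 by (simp add: vec_eq_iff)
  qed
  then have "card (Gc e :: ('a poly^'n^'n) set) = card {A :: 'a^'n^'n. invertible A}"
    by (rule bij_betw_same_card)
  then show ?thesis using True SSeq by simp
qed



definition FF :: "nat \<Rightarrow> nat \<Rightarrow> nat \<Rightarrow> nat \<Rightarrow> nat \<Rightarrow> nat \<Rightarrow> nat" where
  "FF q n C s m z = C * q^((n-1)*(s+z-m)) * (\<Prod>i\<in>{z..<m}. (q^(n-1) - q^i))"

lemma FF_step:
  assumes q: "q \<ge> 1" and zm: "z \<le> m" and mn: "m + 1 \<le> n" and ms: "m + 1 \<le> s + z"
  shows "FF q n C s m z = FF q n C s (m+1) z + q^m * FF q n C (s-1) m z"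
proof -
  define a where "a = s + z - (m+1)"
  define P where "P = (\<Prod>i\<in>{z..<m}. (q^(n-1) - q^i))"
  define X where "X = q^(n-1)"
  define Y where "Y = q^m"
  define K where "K = C * q^((n-1)*a) * P"
  have YX: "Y \<le> X" unfolding X_def Y_def using q mn by (intro power_increasing) auto
  have e1: "s + z - m = a + 1" using ms by (simp add: a_def)
  have e2: "s - 1 + z - m = a" unfolding a_def using ms zm by arith
  have e3: "s + z - (m + 1) = a" by (simp add: a_def)
  have P1: "(\<Prod>i\<in>{z..<m+1}. (q^(n-1) - q^i)) = P * (X - Y)"
    using zm by (simp add: P_def X_def Y_def prod.op_ivl_Suc)
  have pw: "q^((n-1)*(a+1)) = q^((n-1)*a) * X" by (simp add: X_def distrib_left power_add)
  have L: "FF q n C s m z = K * X"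
    unfolding FF_def e1 pw K_def P_def by (simp add: ac_simps)
  have R1: "FF q n C s (m+1) z = K * (X - Y)"
    unfolding FF_def e3 P1 K_def by (simp add: algebra_simps)
  have R2: "q^m * FF q n C (s-1) m z = Y * K"
    unfolding FF_def e2 K_def P_def Y_def by (simp add: algebra_simps)
  have "K * X = K * (X - Y) + Y * K"
  proof -
    have "X = (X - Y) + Y" using YX by simp
    then have "K * X = K * (X - Y) + K * Y" by (metis distrib_left)
    then show ?thesis by (simp add: mult.commute)
  qed
  then show ?thesis using L R1 R2 by simp
qed

lemma FF_zero_step: "FF q n C s (m+1) (m+1) = FF q n C s m m"
  by (simp add: FF_def)

lemma FF_zero_step_Suc: "FF q n C s (Suc m) (Suc m) = FF q n C s m m"
  by (simp add: FF_def)

lemma FF_base0: "FF q n C 0 n n = C"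
  by (simp add: FF_def)

lemma FF_base1:
  assumes "z < n"
  shows "FF q n C s n z = 0"
proof -
  have "(\<Prod>i\<in>{z..<n}. (q^(n-1) - q^i)) = 0"
    by (rule prod_zero) (use assms in \<open>auto intro!: bexI[of _ "n-1"]\<close>)
  then show ?thesis by (simp add: FF_def)
qed

lemma FF_empty: "FF q n C s 0 0 = C * q^((n-1) * s)"
  by (simp add: FF_def)

lemma card_pos_le_sum:
  fixes e :: "'b \<Rightarrow> nat"
  assumes "finite T"
  shows "card {l\<in>T. e l \<noteq> 0} \<le> sum e T"
proof -
  have "card {l\<in>T. e l \<noteq> 0} = (\<Sum>l\<in>{l\<in>T. e l \<noteq> 0}. 1)" by simp
  also have "\<dots> \<le> (\<Sum>l\<in>{l\<in>T. e l \<noteq> 0}. e l)" by (rule sum_mono) auto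
  also have "\<dots> \<le> sum e T" by (rule sum_mono2) (use assms in auto)
  finally show ?thesis .
qed

lemma card_split0:
  fixes e :: "'b \<Rightarrow> nat"
  assumes "finite T"
  shows "card T = card {l\<in>T. e l = 0} + card {l\<in>T. e l \<noteq> 0}"
proof -
  have "T = {l\<in>T. e l = 0} \<union> {l\<in>T. e l \<noteq> 0}" by auto
  then have "card T = card ({l\<in>T. e l = 0} \<union> {l\<in>T. e l \<noteq> 0})" by simp
  also have "\<dots> = card {l\<in>T. e l = 0} + card {l\<in>T. e l \<noteq> 0}"
    by (rule card_Un_disjoint) (use assms in auto)
  finally show ?thesis .
qed

lemma m_le_sz:
  fixes e :: "'n::finite \<Rightarrow> nat"
  shows "card T \<le> sum e UNIV + card {l\<in>T. e l = 0}"
proof -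
  have "card {l\<in>T. e l \<noteq> 0} \<le> sum e T" by (rule card_pos_le_sum) simp
  also have "\<dots> \<le> sum e UNIV" by (rule sum_mono2) auto
  finally show ?thesis using card_split0[of T e] by simp
qed

lemma sum_dec:
  fixes e :: "'n::finite \<Rightarrow> nat"
  assumes "e j > 0"
  shows "sum (e(j := e j - 1)) UNIV = sum e UNIV - 1" "sum (e(j := e j - 1)) UNIV < sum e UNIV"
proof -
  have a: "sum e UNIV = e j + sum e (UNIV - {j})" by (rule sum.remove) auto
  have b: "sum (e(j := e j - 1)) UNIV = (e j - 1) + sum (e(j := e j - 1)) (UNIV - {j})"
    by (subst sum.remove[of _ j]) auto
  have c: "sum (e(j := e j - 1)) (UNIV - {j}) = sum e (UNIV - {j})" by (rule sum.cong) auto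
  show "sum (e(j := e j - 1)) UNIV = sum e UNIV - 1" using a b c assms by simp
  show "sum (e(j := e j - 1)) UNIV < sum e UNIV" using a b c assms by simp
qed

lemma zeros_upd: "j \<notin> S \<Longrightarrow> {l\<in>S. (e(j := x)) l = (0::nat)} = {l\<in>S. e l = 0}"
  by auto

lemma main_count:
  fixes e :: "'n::finite \<Rightarrow> nat"
  shows "card (SS e S :: ('a::{field,finite} poly^'n^'n) set)
    = FF CARD('a) CARD('n) (card {A :: 'a^'n^'n. invertible A}) (sum e UNIV) (card S) (card {l\<in>S. e l = 0})"
proof (induction "sum e UNIV" arbitrary: e S rule: less_induct)
  case less
  define q where "q = CARD('a)"
  define n where "n = CARD('n)"
  define C where "C = card {A :: 'a^'n^'n. invertible A}"
  define s where "s = sum e UNIV"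
  have q1: "q \<ge> 1" unfolding q_def by (simp add: Suc_le_eq)
  have n1: "n \<ge> 1" unfolding n_def by (simp add: Suc_le_eq)
  have IH: "card (SS (e(j := e j - 1)) S' :: ('a poly^'n^'n) set)
      = FF q n C (s - 1) (card S') (card {l\<in>S'. e l = 0})" if "e j > 0" "j \<notin> S'" for j S'
  proof -
    have "card (SS (e(j := e j - 1)) S' :: ('a poly^'n^'n) set)
      = FF q n C (sum (e(j := e j - 1)) UNIV) (card S') (card {l\<in>S'. (e(j := e j - 1)) l = 0})"
      unfolding q_def n_def C_def by (rule less(1)[OF sum_dec(2)[of e j, OF that(1)]])
    then show ?thesis using sum_dec(1)[of e j, OF that(1)] zeros_upd[OF that(2)] by (simp add: s_def)
  qed
  have A: "\<forall>S. card (UNIV - S) = k \<longrightarrow> (\<forall>l\<in>S. \<forall>r. r \<notin> S \<longrightarrow> e l \<le> e r) \<longrightarrow>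
      card (SS e S :: ('a poly^'n^'n) set) = FF q n C s (card S) (card {l\<in>S. e l = 0})" for k
  proof (induction k)
    case 0
    show ?case
    proof (intro allI impI)
      fix S :: "'n set" assume "card (UNIV - S) = 0"
      then have "UNIV - S = {}" by simp
      then have SU: "S = UNIV" by blast
      show "card (SS e S :: ('a poly^'n^'n) set) = FF q n C s (card S) (card {l\<in>S. e l = 0})"
      proof (cases "s = 0")
        case True
        then have "\<forall>l. e l = 0" by (simp add: s_def)
        then have "{l\<in>S. e l = 0} = UNIV" using SU by auto
        then show ?thesis using SU True base_count[of e] FF_base0
          by (simp add: s_def q_def n_def C_def)
      next
        case False
        then obtain l where "e l \<noteq> 0" by (auto simp: s_def)
        then have "l \<notin> {l\<in>S. e l = 0}" by simp
        then have "{l\<in>S. e l = 0} \<subset> UNIV" by blast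
        then have "card {l\<in>S. e l = 0} < card (UNIV :: 'n set)" by (intro psubset_card_mono) simp_all
        then have "card {l\<in>S. e l = 0} < n" unfolding n_def by simp
        then have "FF q n C s n (card {l\<in>S. e l = 0}) = 0" by (rule FF_base1)
        moreover have "card (SS e S :: ('a poly^'n^'n) set) = 0"
        proof -
          have "sum e UNIV \<noteq> 0" using False by (simp add: s_def)
          then show ?thesis using SU base_count[of e, where 'a='a] by (simp only: if_False)
        qed
        ultimately show ?thesis using SU by (simp add: n_def)
      qed
    qed
  next
    case (Suc k)
    show ?case
    proof (intro allI impI)
      fix S :: "'n set"
      assume ck: "card (UNIV - S) = Suc k" and ini: "\<forall>l\<in>S. \<forall>r. r \<notin> S \<longrightarrow> e l \<le> e r"
      have ne: "UNIV - S \<noteq> {}"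
      proof
        assume "UNIV - S = {}"
        then have "card (UNIV - S) = 0" by (simp only: card.empty)
        then show False using ck by simp
      qed
      define j where "j = (SOME j. j \<in> UNIV - S \<and> e j = Min (e ` (UNIV - S)))"
      have "Min (e ` (UNIV - S)) \<in> e ` (UNIV - S)" by (rule Min_in) (use ne in auto)
      then have "\<exists>j. j \<in> UNIV - S \<and> e j = Min (e ` (UNIV - S))" by force
      then have j: "j \<in> UNIV - S" "e j = Min (e ` (UNIV - S))"
        unfolding j_def by (metis (mono_tags, lifting) someI_ex)+
      have jmin: "e j \<le> e r" if "r \<notin> S" for r using j(2) that by simp
      have jS: "j \<notin> S" using j by simp
      have le: "\<forall>l\<in>S. e l \<le> e j" using ini jS by blast
      have ini': "\<forall>l\<in>insert j S. \<forall>r. r \<notin> insert j S \<longrightarrow> e l \<le> e r" using ini jmin by auto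
      have ck': "card (UNIV - insert j S) = k"
      proof -
        have "UNIV - insert j S = (UNIV - S) - {j}" by auto
        then show ?thesis using ck j(1) by simp
      qed
      have S1: "card (SS e (insert j S) :: ('a poly^'n^'n) set)
          = FF q n C s (card (insert j S)) (card {l\<in>insert j S. e l = 0})"
        using Suc.IH ck' ini' by blast
      have st: "card (SS e S :: ('a poly^'n^'n) set) = card (SS e (insert j S) :: ('a poly^'n^'n) set)
          + (if e j = 0 then 0 else q ^ card S * card (SS (e(j := e j - 1)) S :: ('a poly^'n^'n) set))"
        unfolding q_def by (rule star[OF jS le])
      have cS: "card (insert j S) = card S + 1" using jS by simp
      show "card (SS e S :: ('a poly^'n^'n) set) = FF q n C s (card S) (card {l\<in>S. e l = 0})"
      proof (cases "e j = 0")
        case True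
        then have all0: "\<forall>l\<in>S. e l = 0" using le by auto
        then have z1: "{l\<in>S. e l = 0} = S" by auto
        have z2: "{l\<in>insert j S. e l = 0} = insert j S" using all0 True by auto
        show ?thesis using st S1 True unfolding z1 z2 cS by (simp add: FF_zero_step FF_zero_step_Suc)
      next
        case False
        then have z2: "{l\<in>insert j S. e l = 0} = {l\<in>S. e l = 0}" by auto
        have zm: "card {l\<in>S. e l = 0} \<le> card S" by (rule card_mono) auto
        have mn: "card S + 1 \<le> n" using cS card_mono[of UNIV "insert j S"] by (simp add: n_def)
        have ms: "card S + 1 \<le> s + card {l\<in>S. e l = 0}"
          using m_le_sz[of "insert j S" e] cS z2 by (simp add: s_def)
        have "card (SS e S :: ('a poly^'n^'n) set)
           = FF q n C s (card S + 1) (card {l\<in>S. e l = 0}) + q ^ card S * FF q n C (s - 1) (card S) (card {l\<in>S. e l = 0})"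
          using st S1 IH[OF _ jS] False unfolding z2 cS by simp
        also have "\<dots> = FF q n C s (card S) (card {l\<in>S. e l = 0})"
          using FF_step[OF q1 zm mn ms] by simp
        finally show ?thesis .
      qed
    qed
  qed
  have A': "card (SS e {} :: ('a poly^'n^'n) set) = FF q n C s 0 0"
    using A[of "card (UNIV :: 'n set)"] by simp
  have B: "\<forall>S. card S = m \<longrightarrow> card (SS e S :: ('a poly^'n^'n) set) = FF q n C s (card S) (card {l\<in>S. e l = 0})" for m
  proof (induction m)
    case 0
    then show ?case using A' by simp
  next
    case (Suc m)
    show ?case
    proof (intro allI impI)
      fix S :: "'n set" assume cS: "card S = Suc m"
      then have ne: "S \<noteq> {}" by auto
      define j where "j = (SOME j. j \<in> S \<and> e j = Max (e ` S))"
      have "Max (e ` S) \<in> e ` S" by (rule Max_in) (use ne in auto)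
      then have "\<exists>j. j \<in> S \<and> e j = Max (e ` S)" by force
      then have j: "j \<in> S" "e j = Max (e ` S)"
        unfolding j_def by (metis (mono_tags, lifting) someI_ex)+
      define S0 where "S0 = S - {j}"
      have jS0: "j \<notin> S0" by (simp add: S0_def)
      have le: "\<forall>l\<in>S0. e l \<le> e j" using j by (auto simp: S0_def)
      have ins: "insert j S0 = S" using j by (auto simp: S0_def)
      have cS0: "card S0 = m" using cS j by (simp add: S0_def)
      have IH0: "card (SS e S0 :: ('a poly^'n^'n) set) = FF q n C s m (card {l\<in>S0. e l = 0})"
        using Suc.IH cS0 by blast
      have st: "card (SS e S0 :: ('a poly^'n^'n) set) = card (SS e S :: ('a poly^'n^'n) set)
          + (if e j = 0 then 0 else q ^ m * card (SS (e(j := e j - 1)) S0 :: ('a poly^'n^'n) set))"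
        using star[OF jS0 le] unfolding ins cS0 q_def .
      show "card (SS e S :: ('a poly^'n^'n) set) = FF q n C s (card S) (card {l\<in>S. e l = 0})"
      proof (cases "e j = 0")
        case True
        then have all0: "\<forall>l\<in>S0. e l = 0" using le by auto
        then have z1: "{l\<in>S0. e l = 0} = S0" by auto
        have z2: "{l\<in>S. e l = 0} = S" using all0 True ins by auto
        have "card (SS e S :: ('a poly^'n^'n) set) = FF q n C s m m" using st IH0 True z1 cS0 by simp
        also have "\<dots> = FF q n C s (m+1) (m+1)" by (simp add: FF_zero_step_Suc)
        finally show ?thesis using z2 cS by simp
      next
        case False
        then have z2: "{l\<in>S. e l = 0} = {l\<in>S0. e l = 0}" using ins by auto
        have zm: "card {l\<in>S0. e l = 0} \<le> m" using cS0 by (metis (no_types, lifting) card_mono finite mem_Collect_eq subsetI)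
        have mn: "m + 1 \<le> n" using cS card_mono[of UNIV S] by (simp add: n_def)
        have ms: "m + 1 \<le> s + card {l\<in>S0. e l = 0}"
          using m_le_sz[of S e] cS z2 by (simp add: s_def)
        have "FF q n C s m (card {l\<in>S0. e l = 0})
           = card (SS e S :: ('a poly^'n^'n) set) + q ^ m * FF q n C (s - 1) m (card {l\<in>S0. e l = 0})"
          using st IH0 IH[OF _ jS0] False cS0 by simp
        moreover have "FF q n C s m (card {l\<in>S0. e l = 0})
           = FF q n C s (m+1) (card {l\<in>S0. e l = 0}) + q ^ m * FF q n C (s - 1) m (card {l\<in>S0. e l = 0})"
          by (rule FF_step[OF q1 zm mn ms])
        ultimately have "card (SS e S :: ('a poly^'n^'n) set) = FF q n C s (m+1) (card {l\<in>S0. e l = 0})"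
          by simp
        then show ?thesis using z2 cS by simp
      qed
    qed
  qed
  show ?case using B[of "card S"] by (simp add: q_def n_def C_def s_def)
qed

lemma Gc_count:
  fixes e :: "'n::finite \<Rightarrow> nat"
  shows "card (Gc e :: ('a::{field,finite} poly^'n^'n) set)
    = card {A :: 'a^'n^'n. invertible A} * CARD('a) ^ ((CARD('n) - 1) * sum e UNIV)"
  using main_count[of e "{}", where 'a='a] by (simp add: SS_empty FF_empty)



lemma GL_mult:
  fixes A B :: "'a::field poly^'n^'n"
  assumes "A \<in> GL_poly" "B \<in> GL_poly"
  shows "A ** B \<in> GL_poly"
  using assms by (auto simp: GL_poly_def det_mul degree_mult_eq)

definition rowop :: "'n::finite \<Rightarrow> ('n \<Rightarrow> 'a::comm_ring_1) \<Rightarrow> 'a^'n^'n \<Rightarrow> 'a^'n^'n" where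
  "rowop i0 c P = (\<chi> r. if r = i0 then P$i0 + (\<Sum>s\<in>UNIV-{i0}. c s *s P$s) else P$r)"

lemma rowop_nth: "rowop i0 c P $ r $ k = (if r = i0 then P$i0$k + (\<Sum>s\<in>UNIV-{i0}. c s * P$s$k) else P$r$k)"
  by (simp add: rowop_def sum_component)

lemma rowop_det: "det (rowop i0 c P) = det P"
  unfolding rowop_def by (rule det_rowop) simp

lemma rowop_mat1_nth:
  "rowop i0 c (mat 1 :: 'a::comm_ring_1^'n::finite^'n) $ r $ s = (if r = i0 then (if s = i0 then 1 else c s) else (if r = s then 1 else 0))"
proof (cases "r = i0")
  case True
  have "(\<Sum>s'\<in>UNIV-{i0}. c s' * (mat 1 :: 'a^'n^'n)$s'$s) = (if s = i0 then 0 else c s)"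
  proof (cases "s = i0")
    case True
    then show ?thesis by (auto simp: mat_def intro!: sum.neutral)
  next
    case False
    have "(\<Sum>s'\<in>UNIV-{i0}. c s' * (mat 1 :: 'a^'n^'n)$s'$s) = (\<Sum>s'\<in>UNIV-{i0}. if s' = s then c s else 0)"
      by (intro sum.cong refl) (auto simp: mat_def)
    also have "\<dots> = c s" using False by (simp add: sum.delta)
    finally show ?thesis using False by simp
  qed
  then show ?thesis using True by (simp add: rowop_nth mat_def)
next
  case False
  then show ?thesis by (simp add: rowop_nth mat_def)
qed

lemma rowop_mult:
  fixes P :: "'a::comm_ring_1^'n::finite^'n"
  shows "rowop i0 c P = rowop i0 c (mat 1) ** P"
proof -
  have "rowop i0 c P $ r $ k = (rowop i0 c (mat 1) ** P) $ r $ k" for r k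
  proof -
    show ?thesis
    proof (cases "r = i0")
      case True
      have "(rowop i0 c (mat 1) ** P) $ r $ k = (\<Sum>s\<in>UNIV. rowop i0 c (mat 1) $ r $ s * P$s$k)"
        by (simp add: matrix_matrix_mult_def)
      also have "\<dots> = (\<Sum>s\<in>UNIV. (if s = i0 then 1 else c s) * P$s$k)"
        by (intro sum.cong refl) (simp add: rowop_mat1_nth True)
      also have "\<dots> = P$i0$k + (\<Sum>s\<in>UNIV-{i0}. (if s = i0 then 1 else c s) * P$s$k)"
        by (subst sum.remove[of _ i0]) auto
      also have "(\<Sum>s\<in>UNIV-{i0}. (if s = i0 then 1 else c s) * P$s$k) = (\<Sum>s\<in>UNIV-{i0}. c s * P$s$k)"
        by (intro sum.cong refl) auto
      finally show ?thesis using True by (simp add: rowop_nth)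
    next
      case False
      have "(rowop i0 c (mat 1) ** P) $ r $ k = (\<Sum>s\<in>UNIV. rowop i0 c (mat 1) $ r $ s * P$s$k)"
        by (simp add: matrix_matrix_mult_def)
      also have "\<dots> = (\<Sum>s\<in>UNIV. (if r = s then 1 else 0) * P$s$k)"
        by (intro sum.cong refl) (simp add: rowop_mat1_nth False)
      also have "\<dots> = (\<Sum>s\<in>UNIV. if r = s then P$s$k else 0)" by (intro sum.cong refl) simp
      also have "\<dots> = P$r$k" by (simp add: sum.delta)
      finally show ?thesis using False by (simp add: rowop_nth)
    qed
  qed
  then show ?thesis by (simp add: vec_eq_iff)
qed

lemma rowop_inv: "rowop i0 (\<lambda>s. - c s) (rowop i0 c P) = P"
proof -
  have "rowop i0 (\<lambda>s. - c s) (rowop i0 c P) $ r $ k = P $ r $ k" for r k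
  proof (cases "r = i0")
    case True
    have "(\<Sum>s\<in>UNIV-{i0}. - c s * rowop i0 c P $ s $ k) = - (\<Sum>s\<in>UNIV-{i0}. c s * P $ s $ k)"
      by (simp add: rowop_nth sum_negf)
    then show ?thesis using True by (simp add: rowop_nth)
  next
    case False
    then show ?thesis by (simp add: rowop_nth)
  qed
  then show ?thesis by (simp add: vec_eq_iff)
qed

lemma rowop_GL: "rowop i0 c (mat 1 :: 'a::field poly^'n::finite^'n) \<in> GL_poly"
  by (simp add: GL_poly_def rowop_det)



lemma left_kernel:
  fixes A :: "'a::field^'n::finite^'n"
  assumes "det A = 0"
  shows "\<exists>w. w \<noteq> 0 \<and> (\<forall>j. (\<Sum>i\<in>UNIV. w$i * A$i$j) = 0)"
proof -
  have "det (transpose A) = 0" using assms by simp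
  then have "\<not> indep (transpose A) UNIV" by (simp add: indep_UNIV)
  then obtain w where w: "transpose A *v w = 0" "w \<noteq> 0" unfolding indep_def by blast
  have "(\<Sum>i\<in>UNIV. w$i * A$i$j) = 0" for j
  proof -
    have "(transpose A *v w) $ j = 0" using w(1) by simp
    then show ?thesis by (simp add: mv_nth transpose_def mult.commute)
  qed
  then show ?thesis using w(2) by blast
qed

lemma reduce_step:
  fixes P :: "'a::field poly^'n::finite^'n"
  assumes detP: "det P \<noteq> 0" and bd: "\<forall>i j. degree (P$i$j) \<le> d i"
    and sing: "det (\<chi> i j. coeff (P$i$j) (d i)) = 0"
  shows "\<exists>E E' d'. E \<in> GL_poly \<and> E' \<in> GL_poly \<and> E' ** (E ** P) = P \<and>
           (\<forall>i j. degree ((E ** P)$i$j) \<le> d' i) \<and> sum d' UNIV < sum d UNIV"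
proof -
  let ?T = "\<chi> i j. coeff (P$i$j) (d i)"
  obtain w where w: "w \<noteq> 0" "\<And>j. (\<Sum>i\<in>UNIV. w$i * ?T$i$j) = 0"
    using left_kernel[OF sing] by blast
  let ?I = "{i. w$i \<noteq> 0}"
  have Ine: "?I \<noteq> {}" using w(1) by (auto simp: vec_eq_iff)
  have "Max (d ` ?I) \<in> d ` ?I" by (rule Max_in) (use Ine in auto)
  then obtain i0 where i0: "w$i0 \<noteq> 0" "d i0 = Max (d ` ?I)" by auto
  have dmax: "d i \<le> d i0" if "w$i \<noteq> 0" for i using i0(2) that by simp
  define c where "c s = (if w$s \<noteq> 0 then monom (w$s / w$i0) (d i0 - d s) else 0)" for s
  define P' where "P' = rowop i0 c P"
  have P'r: "P'$r = P$r" if "r \<noteq> i0" for r using that by (simp add: P'_def rowop_def)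
  have row0: "degree (P'$i0$j) \<le> d i0 \<and> coeff (P'$i0$j) (d i0) = 0" for j
  proof -
    have eq: "P'$i0$j = P$i0$j + (\<Sum>s\<in>UNIV-{i0}. c s * P$s$j)" by (simp add: P'_def rowop_nth)
    have dterm: "degree (c s * P$s$j) \<le> d i0" for s
    proof (cases "w$s \<noteq> 0")
      case True
      have "degree (c s * P$s$j) \<le> degree (c s) + degree (P$s$j)" by (rule degree_mult_le)
      also have "\<dots> \<le> (d i0 - d s) + d s" using True bd by (intro add_mono) (auto simp: c_def degree_monom_le)
      also have "\<dots> = d i0" using dmax[OF True] by simp
      finally show ?thesis .
    next
      case False
      then show ?thesis by (simp add: c_def)
    qed
    have deg: "degree (P'$i0$j) \<le> d i0"
    proof -
      have "degree (P$i0$j) \<le> d i0" using bd by simp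
      moreover have "degree (\<Sum>s\<in>UNIV-{i0}. c s * P$s$j) \<le> d i0"
        by (rule degree_sum_le) (use dterm in auto)
      ultimately show ?thesis unfolding eq by (rule degree_add_le)
    qed
    have cterm: "coeff (c s * P$s$j) (d i0) = w$s / w$i0 * coeff (P$s$j) (d s)" for s
    proof (cases "w$s \<noteq> 0")
      case True
      then show ?thesis using dmax[OF True] by (simp add: c_def coeff_monom_mult)
    next
      case False
      then show ?thesis by (simp add: c_def)
    qed
    have "coeff (P'$i0$j) (d i0) = coeff (P$i0$j) (d i0) + (\<Sum>s\<in>UNIV-{i0}. w$s / w$i0 * coeff (P$s$j) (d s))"
      unfolding eq by (simp add: coeff_sum cterm)
    also have "\<dots> = (\<Sum>s\<in>UNIV. w$s / w$i0 * coeff (P$s$j) (d s))"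
      using i0(1) by (subst (2) sum.remove[of _ i0]) auto
    also have "\<dots> = (\<Sum>s\<in>UNIV. w$s * ?T$s$j) / w$i0"
      by (simp add: sum_divide_distrib)
    also have "\<dots> = 0" using w(2) by simp
    finally show ?thesis using deg by simp
  qed
  have di0: "d i0 > 0"
  proof (rule ccontr)
    assume "\<not> d i0 > 0"
    then have "d i0 = 0" by simp
    then have "P'$i0$j = 0" for j
    proof -
      have "degree (P'$i0$j) = 0" using row0[of j] \<open>d i0 = 0\<close> by simp
      then have "P'$i0$j = [:coeff (P'$i0$j) 0:]" by (rule deg0_const)
      then show ?thesis using row0[of j] \<open>d i0 = 0\<close> by simp
    qed
    then have "P' = (\<chi> r. if r = i0 then 0 else P'$r)" by (auto simp: vec_eq_iff)
    then have "det P' = 0" by (metis det_row_0)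
    moreover have "det P' = det P" by (simp add: P'_def rowop_det)
    ultimately show False using detP by simp
  qed
  define d' where "d' = d(i0 := d i0 - 1)"
  have bd': "\<forall>i j. degree (P'$i$j) \<le> d' i"
  proof (intro allI)
    fix i j show "degree (P'$i$j) \<le> d' i"
    proof (cases "i = i0")
      case True
      then show ?thesis using deg_le_pred[of "P'$i0$j" "d i0"] row0[of j] by (simp add: d'_def)
    next
      case False
      then show ?thesis using bd P'r[OF False] by (simp add: d'_def)
    qed
  qed
  have s': "sum d' UNIV < sum d UNIV" unfolding d'_def using sum_dec(2)[of d i0, OF di0] .
  define E where "E = rowop i0 c (mat 1 :: 'a poly^'n^'n)"
  define E' where "E' = rowop i0 (\<lambda>s. - c s) (mat 1 :: 'a poly^'n^'n)"
  have EP: "E ** P = P'" unfolding P'_def E_def by (rule rowop_mult[symmetric])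
  have E'P: "E' ** (E ** P) = P"
  proof -
    have "E' ** P' = rowop i0 (\<lambda>s. - c s) P'" unfolding E'_def by (rule rowop_mult[symmetric])
    also have "\<dots> = P" unfolding P'_def by (rule rowop_inv)
    finally show ?thesis using EP by simp
  qed
  have G: "E \<in> GL_poly" "E' \<in> GL_poly" unfolding E_def E'_def by (rule rowop_GL)+
  have bdE: "\<forall>i j. degree ((E ** P)$i$j) \<le> d' i" using bd' EP by simp
  show ?thesis
    apply (rule exI[of _ E])
    apply (rule exI[of _ E'])
    apply (rule exI[of _ d'])
    using G E'P bdE s' by (simp only: simp_thms)
qed

lemma reduce_exists:
  fixes M :: "'a::field poly^'n::finite^'n"
  assumes "det M \<noteq> 0"
  shows "\<exists>P U V d. P = U ** M \<and> M = V ** P \<and> U \<in> GL_poly \<and> V \<in> GL_poly \<and>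
     (\<forall>i j. degree (P$i$j) \<le> d i) \<and> det (\<chi> i j. coeff (P$i$j) (d i)) \<noteq> 0"
proof -
  have gen: "\<forall>P d. sum d UNIV = N \<longrightarrow> det P \<noteq> 0 \<longrightarrow> (\<forall>i j. degree (P$i$j) \<le> d i) \<longrightarrow>
      (\<exists>U V. P = U ** M \<and> M = V ** P \<and> U \<in> GL_poly \<and> V \<in> GL_poly) \<longrightarrow>
      (\<exists>P U V d. P = U ** M \<and> M = V ** P \<and> U \<in> GL_poly \<and> V \<in> GL_poly \<and>
         (\<forall>i j. degree (P$i$j) \<le> d i) \<and> det (\<chi> i j. coeff (P$i$j) (d i)) \<noteq> 0)" for N
  proof (induction N rule: less_induct)
    case (less N)
    show ?case
    proof (intro allI impI)
      fix P :: "'a poly^'n^'n" and d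
      assume sN: "sum d UNIV = N" and dP: "det P \<noteq> 0" and bd: "\<forall>i j. degree (P$i$j) \<le> d i"
        and UV: "\<exists>U V. P = U ** M \<and> M = V ** P \<and> U \<in> GL_poly \<and> V \<in> GL_poly"
      obtain U V where UV': "P = U ** M" "M = V ** P" "U \<in> GL_poly" "V \<in> GL_poly" using UV by blast
      show "\<exists>P U V d. P = U ** M \<and> M = V ** P \<and> U \<in> GL_poly \<and> V \<in> GL_poly \<and>
         (\<forall>i j. degree (P$i$j) \<le> d i) \<and> det (\<chi> i j. coeff (P$i$j) (d i)) \<noteq> 0"
      proof (cases "det (\<chi> i j. coeff (P$i$j) (d i)) = 0")
        case False
        then show ?thesis using UV' bd by blast
      next
        case True
        obtain E E' d' where E: "E \<in> GL_poly" "E' \<in> GL_poly" "E' ** (E ** P) = P"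
          "\<forall>i j. degree ((E ** P)$i$j) \<le> d' i" "sum d' UNIV < sum d UNIV"
          using reduce_step[OF dP bd True] by blast
        have "det (E ** P) \<noteq> 0" using E(1) dP by (simp add: det_mul GL_poly_def)
        moreover have "E ** P = (E ** U) ** M"
        proof -
          have "E ** P = E ** (U ** M)" using UV'(1) by (rule arg_cong)
          then show ?thesis by (simp only: matrix_mul_assoc)
        qed
        moreover have "M = (V ** E') ** (E ** P)"
        proof -
          have "(V ** E') ** (E ** P) = V ** (E' ** (E ** P))" by (simp only: matrix_mul_assoc)
          then show ?thesis using UV'(2) E(3) by (simp only:)
        qed
        moreover have "E ** U \<in> GL_poly" by (rule GL_mult[OF E(1) UV'(3)])
        moreover have "V ** E' \<in> GL_poly" by (rule GL_mult[OF UV'(4) E(2)])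
        ultimately have "\<exists>U V. E ** P = U ** M \<and> M = V ** (E ** P) \<and> U \<in> GL_poly \<and> V \<in> GL_poly"
          by blast
        then show ?thesis using less.IH[of "sum d' UNIV"] E(4,5) sN \<open>det (E ** P) \<noteq> 0\<close> by blast
      qed
    qed
  qed
  define d where "d i = (\<Sum>j\<in>UNIV. degree (M$i$j))" for i
  have bd: "\<forall>i j. degree (M$i$j) \<le> d i"
    unfolding d_def by (intro allI member_le_sum) auto
  have "M = mat 1 ** M" by simp
  moreover have "(mat 1 :: 'a poly^'n^'n) \<in> GL_poly" by (simp add: GL_poly_def)
  ultimately have "\<exists>U V. M = U ** M \<and> M = V ** M \<and> U \<in> GL_poly \<and> V \<in> GL_poly" by blast
  then show ?thesis using gen[of "sum d UNIV"] assms bd by blast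
qed



lemma vm_nth: "(c v* P) $ j = (\<Sum>i\<in>UNIV. c$i * P$i$j)"
  by (simp add: vector_matrix_mult_def mult.commute)

lemma pred_deg:
  fixes P :: "'a::field poly^'n::finite^'n" and c :: "'a poly^'n"
  assumes bd: "\<forall>i j. degree (P$i$j) \<le> d i" and nz: "det (\<chi> i j. coeff (P$i$j) (d i)) \<noteq> 0"
    and c: "c \<noteq> 0"
  shows "\<exists>j. (c v* P)$j \<noteq> 0 \<and> (\<forall>i. c$i \<noteq> 0 \<longrightarrow> degree (c$i) + d i \<le> degree ((c v* P)$j))"
proof -
  let ?T = "\<chi> i j. coeff (P$i$j) (d i)"
  let ?I = "{i. c$i \<noteq> 0}"
  let ?f = "\<lambda>i. degree (c$i) + d i"
  have Ine: "?I \<noteq> {}" using c by (auto simp: vec_eq_iff)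
  define del where "del = Max (?f ` ?I)"
  have "del \<in> ?f ` ?I" unfolding del_def by (rule Max_in) (use Ine in auto)
  then obtain i1 where i1: "c$i1 \<noteq> 0" "?f i1 = del" by auto
  have fle: "?f i \<le> del" if "c$i \<noteq> 0" for i unfolding del_def using that by (intro Max_ge) auto
  define w where "w = (\<chi> i. if c$i \<noteq> 0 \<and> ?f i = del then lead_coeff (c$i) else 0)"
  have "w$i1 \<noteq> 0" using i1 by (simp add: w_def)
  then have "w \<noteq> 0" by auto
  have "det (transpose ?T) \<noteq> 0" using nz by simp
  then have "indep (transpose ?T) UNIV" by (simp add: indep_UNIV)
  then have "transpose ?T *v w \<noteq> 0" using \<open>w \<noteq> 0\<close> unfolding indep_def by blast
  then obtain j where j: "(transpose ?T *v w) $ j \<noteq> 0" by (auto simp: vec_eq_iff)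
  have key: "coeff ((c v* P)$j) del = (transpose ?T *v w) $ j"
  proof -
    have "coeff ((c v* P)$j) del = (\<Sum>i\<in>UNIV. coeff (c$i * P$i$j) del)"
      by (simp add: vm_nth coeff_sum)
    also have "\<dots> = (\<Sum>i\<in>UNIV. coeff (P$i$j) (d i) * w$i)"
    proof (intro sum.cong refl)
      fix i
      show "coeff (c$i * P$i$j) del = coeff (P$i$j) (d i) * w$i"
      proof (cases "c$i \<noteq> 0 \<and> ?f i = del")
        case True
        have "coeff (c$i * P$i$j) (degree (c$i) + d i) = coeff (c$i) (degree (c$i)) * coeff (P$i$j) (d i)"
          using bd by (intro coeff_mult_bound) auto
        then show ?thesis using True by (simp add: w_def)
      next
        case False
        have "coeff (c$i * P$i$j) del = 0"
        proof (cases "c$i = 0")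
          case True
          then show ?thesis by simp
        next
          case cnz: False
          then have "?f i < del" using False fle[OF cnz] by simp
          moreover have "degree (c$i * P$i$j) \<le> ?f i"
            using bd by (intro order_trans[OF degree_mult_le]) auto
          ultimately show ?thesis by (intro coeff_eq_0) simp
        qed
        moreover have "w$i = 0" using False by (simp add: w_def)
        ultimately show ?thesis by simp
      qed
    qed
    also have "\<dots> = (transpose ?T *v w) $ j" by (simp add: mv_nth transpose_def)
    finally show ?thesis .
  qed
  then have cnz: "coeff ((c v* P)$j) del \<noteq> 0" using j by simp
  then have "(c v* P)$j \<noteq> 0" by auto
  moreover have "del \<le> degree ((c v* P)$j)" using cnz by (rule le_degree)
  ultimately show ?thesis using fle by (meson order_trans)
qed

theorem mainTheorem1:
  fixes M :: "'a::{field,finite} poly ^'n^'n" and k :: nat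
  assumes "det M \<noteq> 0"
    and "degree (det M) \<le> k"
  shows "card {X \<in> GL_orbit M. \<forall>i j. degree (X $ i $ j) \<le> k}
       = card {A :: 'a ^'n^'n. invertible A}
         * CARD('a) ^ ((CARD('n) - 1) * (CARD('n) * k - degree (det M)))"
proof -
  obtain P U V d where PUV: "P = U ** M" "M = V ** P" "U \<in> GL_poly" "V \<in> GL_poly"
    and bd: "\<forall>i j. degree (P$i$j) \<le> d i" and nz: "det (\<chi> i j. coeff (P$i$j) (d i)) \<noteq> 0"
    using reduce_exists[OF assms(1)] by blast
  define t where "t = degree (det M)"
  have detP: "det P = det U * det M" using PUV(1) by (simp add: det_mul)
  have sd: "sum d UNIV = t"
  proof -
    have "\<And>i j. degree (P$i$j) \<le> d i" using bd by simp
    from det_row_bound[OF this]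
    have a: "degree (det P) \<le> sum d UNIV" and b: "coeff (det P) (sum d UNIV) \<noteq> 0" using nz by auto
    from b have "sum d UNIV \<le> degree (det P)" by (rule le_degree)
    with a have "degree (det P) = sum d UNIV" by simp
    moreover have "degree (det P) = t"
      using PUV(3) assms(1) by (simp add: detP GL_poly_def degree_mult_eq t_def)
    ultimately show ?thesis by simp
  qed
  have dk: "d j \<le> k" for j
  proof -
    have "d j \<le> sum d UNIV" by (rule member_le_sum) auto
    then show ?thesis using sd assms(2) by (simp add: t_def)
  qed
  define e where "e j = k - d j" for j
  have se: "sum e UNIV = CARD('n) * k - t"
  proof -
    have "sum e UNIV = sum (\<lambda>_::'n. k) UNIV - sum d UNIV"
      unfolding e_def using sum_subtractf_nat[of "UNIV :: 'n set" d "\<lambda>_. k"] dk by simp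
    then show ?thesis using sd by simp
  qed
  let ?L = "{X \<in> GL_orbit M. \<forall>i j. degree (X $ i $ j) \<le> k}"
  have into: "g ** P \<in> ?L" if g: "g \<in> Gc e" for g
  proof -
    have gdeg: "degree (g$i$j) \<le> k - d j" for i j using g by (simp add: Gc_def e_def)
    have "g ** P = (g ** U) ** M" using PUV(1) by (simp add: matrix_mul_assoc)
    moreover have "g ** U \<in> GL_poly"
      using g PUV(3) by (intro GL_mult) (auto simp: Gc_def GL_poly_def)
    ultimately have "g ** P \<in> GL_orbit M" by (auto simp: GL_orbit_def)
    moreover have "degree ((g ** P)$i$l) \<le> k" for i l
    proof -
      have "(g ** P)$i$l = (\<Sum>j\<in>UNIV. g$i$j * P$j$l)" by (simp add: matrix_matrix_mult_def)
      also have "degree \<dots> \<le> k"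
      proof (rule degree_sum_le)
        fix j
        have "degree (g$i$j * P$j$l) \<le> degree (g$i$j) + degree (P$j$l)" by (rule degree_mult_le)
        also have "\<dots> \<le> (k - d j) + d j" using gdeg bd by (intro add_mono) auto
        also have "\<dots> = k" using dk by simp
        finally show "degree (g$i$j * P$j$l) \<le> k" .
      qed simp
      finally show ?thesis .
    qed
    ultimately show ?thesis by simp
  qed
  have onto: "X \<in> (\<lambda>g. g ** P) ` Gc e" if X: "X \<in> ?L" for X
  proof -
    obtain h where h: "h \<in> GL_poly" "X = h ** M" using X by (auto simp: GL_orbit_def)
    define g where "g = h ** V"
    have XgP: "X = g ** P" unfolding g_def using h(2) PUV(2) by (simp add: matrix_mul_assoc)
    have gGL: "g \<in> GL_poly" unfolding g_def using h(1) PUV(4) by (rule GL_mult)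
    have "degree (g$i$j) \<le> e j" for i j
    proof (cases "g$i$j = 0")
      case True
      then show ?thesis by simp
    next
      case False
      then have "g$i \<noteq> 0" by auto
      from pred_deg[OF bd nz this] obtain l where
        l: "\<forall>i'. g$i$i' \<noteq> 0 \<longrightarrow> degree (g$i$i') + d i' \<le> degree ((g$i v* P)$l)" by blast
      have "(g$i v* P) = X$i" using XgP by (simp add: vec_eq_iff vm_nth matrix_matrix_mult_def)
      then have "degree ((g$i v* P)$l) \<le> k" using X by simp
      moreover have "degree (g$i$j) + d j \<le> degree ((g$i v* P)$l)" using l False by blast
      ultimately show ?thesis unfolding e_def by linarith
    qed
    then have "g \<in> Gc e" using gGL by (simp add: Gc_def GL_poly_def)
    then show ?thesis using XgP by blast
  qed
  have inj: "inj_on (\<lambda>g. g ** P) (Gc e)"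
  proof (rule inj_onI)
    fix g1 g2 assume "g1 \<in> Gc e" "g2 \<in> Gc e" and eq: "g1 ** P = g2 ** P"
    show "g1 = g2"
    proof (rule ccontr)
      assume "g1 \<noteq> g2"
      then obtain i where "g1$i \<noteq> g2$i" by (auto simp: vec_eq_iff)
      then have cn: "g1$i - g2$i \<noteq> 0" by simp
      from pred_deg[OF bd nz cn] obtain l where l: "((g1$i - g2$i) v* P)$l \<noteq> 0" by blast
      have "((g1$i - g2$i) v* P)$l = (g1 ** P)$i$l - (g2 ** P)$i$l"
        by (simp add: vm_nth matrix_matrix_mult_def left_diff_distrib sum_subtractf)
      then show False using l eq by simp
    qed
  qed
  have "?L = (\<lambda>g. g ** P) ` Gc e" using into onto by blast
  then have "card ?L = card (Gc e :: ('a poly^'n^'n) set)" using inj by (simp add: card_image)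
  also have "\<dots> = card {A :: 'a^'n^'n. invertible A} * CARD('a) ^ ((CARD('n) - 1) * sum e UNIV)"
    by (rule Gc_count)
  finally show ?thesis using se by (simp add: t_def)
qed

end
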